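(* For $n\ge1$, the map $$\sigma\mapsto\big(\Delta(\sigma^{(n-1)}),\dots,\Delta(\sigma''),\Delta(\sigma'),\Delta(\sigma)\big)$$ is a bijection from $\mathfrak{S}_n$ onto the set of $n$-chains of Dyck shapes.
   Context: Permutations $\sigma\in\mathfrak{S}_n$ are written as words $\sigma_1\cdots\sigma_n$, with the conventions $\sigma_0=0$, $\sigma_{n+1}=n+1$. A value $\sigma_i$ ($1\le i\le n$) is a peak if $\sigma_{i-1}<\sigma_i>\sigma_{i+1}$, a valley if $\sigma_{i-1}>\sigma_i<\sigma_{i+1}$, a double ascent if $\sigma_{i-1}<\sigma_i<\sigma_{i+1}$, a double descent if $\sigma_{i-1}>\sigma_i>\sigma_{i+1}$. The profile $\Delta(\sigma)$ is the word $w_1\cdots w_{2n}$ over $\{\nearrow,\searrow\}$ where, for each value $j\in\{1,\dots,n\}$, $w_{2j-1}w_{2j}$ is $\nearrow\nearrow$ if $j$ is a valley, $\searrow\searrow$ if $j$ is a peak, $\nearrow\searrow$ if $j$ is a double ascent, $\searrow\nearrow$ if $j$ is a double descent. $\sigma'\in\mathfrak{S}_{n-1}$ is obtained from $\sigma$ by deleting the letter $n$; $\sigma^{(0)}=\sigma$ and $\sigma^{(i+1)}=(\sigma^{(i)})'$, so $\sigma^{(n-i)}\in\mathfrak{S}_i$. A Dyck path of length $2m$ is a lattice path from $(0,0)$ to $(2m,0)$ with steps $\nearrow=(1,1)$, $\searrow=(1,-1)$ never going below the $x$-axis; $P(x)$ denotes its height at abscissa $x$. A cell is a point $(a,b)\in\mathbb{Z}^2$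 with $b\ge0$, $a+b$ even (the tilted square with vertices $(a,b),(a+1,b\pm1),(a+2,b)$). The Dyck shape of $P$ (length $2m$) is $S(P)=\{(a,b): b\ge0,\ a+b\text{ even},\ 0\le a\le 2m-2,\ b+1\le P(a+1)\}$. Cells are adjacent if they differ by $(\pm1,\pm1)$. A ribbon is a nonempty set of cells, connected for adjacency, containing no four cells $(a,b),(a+1,b+1),(a+1,b-1),(a+2,b)$. For Dyck paths $D$ of length $2m$ and $E$ of length $2m+2$, $D\sqsubset E$ means $S(D)\subseteq S(E)$ and $S(E)\setminus S(D)$ is a ribbon. An $n$-chain of Dyck shapes is a sequence $D_1\sqsubset\cdots\sqsubset D_n$ of Dyck paths with $D_i$ of length $2i$. *)

theory Defs
  imports Main
begin

definition perms :: "nat \<Rightarrow> nat list set" where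
  "perms n = {xs. length xs = n \<and> distinct xs \<and> set xs = {1..n}}"

definition sig :: "nat list \<Rightarrow> nat \<Rightarrow> nat" where
  "sig xs i = (if i = 0 then 0 else if i \<le> length xs then xs ! (i - 1) else length xs + 1)"

definition pos :: "nat list \<Rightarrow> nat \<Rightarrow> nat" where
  "pos xs j = (THE i. 1 \<le> i \<and> i \<le> length xs \<and> xs ! (i - 1) = j)"

definition is_peak :: "nat list \<Rightarrow> nat \<Rightarrow> bool" where
  "is_peak xs j = (let i = pos xs j in sig xs (i - 1) < j \<and> j > sig xs (i + 1))"
definition is_valley :: "nat list \<Rightarrow> nat \<Rightarrow> bool" where
  "is_valley xs j = (let i = pos xs j in sig xs (i - 1) > j \<and> j < sig xs (i + 1))"
definition is_dasc :: "nat list \<Rightarrow> nat \<Rightarrow> bool" where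
  "is_dasc xs j = (let i = pos xs j in sig xs (i - 1) < j \<and> j < sig xs (i + 1))"
definition is_ddes :: "nat list \<Rightarrow> nat \<Rightarrow> bool" where
  "is_ddes xs j = (let i = pos xs j in sig xs (i - 1) > j \<and> j > sig xs (i + 1))"

datatype step = Up | Dn

text \<open>The two letters w_(2j-1) w_(2j) of the profile contributed by the value j.\<close>
definition letters :: "nat list \<Rightarrow> nat \<Rightarrow> step list" where
  "letters xs j =
     (if is_valley xs j then [Up, Up]
      else if is_peak xs j then [Dn, Dn]
      else if is_dasc xs j then [Up, Dn]
      else [Dn, Up])"

definition profile :: "nat list \<Rightarrow> step list" where
  "profile xs = concat (map (letters xs) [1..<length xs + 1])"

definition del_max :: "nat list \<Rightarrow> nat list" where
  "del_max xs = filter (\<lambda>x. x \<noteq> length xs) xs"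

text \<open>The map sigma |-> (Delta(sigma^(n-1)), ..., Delta(sigma')), Delta(sigma));
  entry i (0-based) is Delta(sigma^(n-1-i)), which lies in S_(i+1).\<close>
definition profile_chain :: "nat list \<Rightarrow> step list list" where
  "profile_chain xs = map (\<lambda>i. profile ((del_max ^^ (length xs - 1 - i)) xs)) [0..<length xs]"

fun stepval :: "step \<Rightarrow> int" where
  "stepval Up = 1" | "stepval Dn = -1"

definition height :: "step list \<Rightarrow> nat \<Rightarrow> int" where
  "height D x = sum_list (map stepval (take x D))"

definition dyck :: "step list \<Rightarrow> bool" where
  "dyck D = (even (length D) \<and> (\<forall>x \<le> length D. height D x \<ge> 0) \<and> height D (length D) = 0)"

type_synonym cell = "int \<times> int"

definition shape :: "step list \<Rightarrow> cell set" where
  "shape D = {(a, b). b \<ge> 0 \<and> even (a + b) \<and> 0 \<le> a \<and> a \<le> int (length D) - 2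
                      \<and> b + 1 \<le> height D (nat (a + 1))}"

definition adjacent :: "cell \<Rightarrow> cell \<Rightarrow> bool" where
  "adjacent c d = (\<bar>fst c - fst d\<bar> = 1 \<and> \<bar>snd c - snd d\<bar> = 1)"

definition connected_cells :: "cell set \<Rightarrow> bool" where
  "connected_cells R = (\<forall>c\<in>R. \<forall>d\<in>R.
      (c, d) \<in> ({(x, y). x \<in> R \<and> y \<in> R \<and> adjacent x y})\<^sup>*)"

definition ribbon :: "cell set \<Rightarrow> bool" where
  "ribbon R = (R \<noteq> {} \<and> connected_cells R \<and>
      \<not> (\<exists>a b. (a, b) \<in> R \<and> (a + 1, b + 1) \<in> R \<and> (a + 1, b - 1) \<in> R \<and> (a + 2, b) \<in> R))"

definition shape_step :: "step list \<Rightarrow> step list \<Rightarrow> bool" where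
  "shape_step D E = (length E = length D + 2 \<and> shape D \<subseteq> shape E \<and> ribbon (shape E - shape D))"

text \<open>n-chains D_1 \<sqsubset> ... \<sqsubset> D_n; entry i (0-based) is D_(i+1), of length 2(i+1).\<close>
definition chains :: "nat \<Rightarrow> step list list set" where
  "chains n = {Ds. length Ds = n
      \<and> (\<forall>i < n. dyck (Ds ! i) \<and> length (Ds ! i) = 2 * (i + 1))
      \<and> (\<forall>i. i + 1 < n \<longrightarrow> shape_step (Ds ! i) (Ds ! (i + 1)))}"

end

theory Submission
  imports Defs
begin


lemma height_0[simp]: "height D 0 = 0" by (simp add: height_def)

lemma height_Suc: "x < length D \<Longrightarrow> height D (Suc x) = height D x + stepval (D ! x)"
  by (simp add: height_def take_Suc_conv_app_nth)

lemma height_ge: "length D \<le> x \<Longrightarrow> height D x = height D (length D)"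
  by (simp add: height_def)

lemma stepval_cases: "stepval s = 1 \<or> stepval s = -1" by (cases s) auto

lemma stepval_inj: "stepval s = stepval t \<Longrightarrow> s = t" by (cases s; cases t) auto

lemma height_par: "x \<le> length D \<Longrightarrow> even (height D x + int x)"
proof (induction x)
  case 0 then show ?case by simp
next
  case (Suc x)
  then have e: "height D (Suc x) = height D x + stepval (D!x)" by (simp add: height_Suc)
  have "even (height D x + int x)" using Suc by simp
  have ev: "even (stepval (D!x) + 1)" by (cases "D!x") auto
  have "height D (Suc x) + int (Suc x) = (height D x + int x) + (stepval (D!x) + 1)" using e by simp
  then show ?case using ev \<open>even (height D x + int x)\<close> by simp
qed

lemma height_step: "\<bar>height D (Suc x) - height D x\<bar> \<le> 1"
proof (cases "x < length D")
  case True then show ?thesis using stepval_cases[of "D!x"] by (auto simp: height_Suc)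
next
  case False then show ?thesis using height_ge[of D x] height_ge[of D "Suc x"] by simp
qed

lemma dyck_nonneg: "dyck D \<Longrightarrow> height D x \<ge> 0"
proof (cases "x \<le> length D")
  case True then show "dyck D \<Longrightarrow> ?thesis" by (simp add: dyck_def)
next
  case False then show "dyck D \<Longrightarrow> ?thesis" using height_ge[of D x] by (simp add: dyck_def)
qed

lemma dyck_tail:
  assumes "dyck E" "length E = Suc (Suc k)"
  shows "height E (Suc k) = 1 \<and> E!(Suc k) = Dn \<and>
     ((height E k = 0 \<and> E!k = Up) \<or> (height E k = 2 \<and> E!k = Dn))"
proof -
  have h2: "height E (Suc (Suc k)) = 0" using assms by (simp add: dyck_def)
  have n1: "height E (Suc k) \<ge> 0" "height E k \<ge> 0" using dyck_nonneg[OF assms(1)] by auto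
  have s1: "height E (Suc (Suc k)) = height E (Suc k) + stepval (E!Suc k)"
    using assms by (simp add: height_Suc)
  have s0: "height E (Suc k) = height E k + stepval (E!k)"
    using assms by (simp add: height_Suc)
  show ?thesis
  proof (cases "E!Suc k")
    case Up then show ?thesis using h2 n1 s1 by simp
  next
    case Dn
    then have "height E (Suc k) = 1" using h2 s1 by simp
    then show ?thesis using Dn s0 n1 by (cases "E!k") simp_all
  qed
qed


lemma mem_diff:
  assumes "length D = 2*m" "length E = 2*m+2"
  shows "(a,b) \<in> shape E - shape D \<longleftrightarrow> (b \<ge> 0 \<and> even (a+b) \<and> 0 \<le> a \<and> a \<le> 2*int m
      \<and> b+1 \<le> height E (nat(a+1)) \<and> \<not> (a \<le> 2*int m - 2 \<and> b+1 \<le> height D (nat(a+1))))"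
  using assms unfolding shape_def by auto

definition Bset :: "step list \<Rightarrow> step list set" where
  "Bset D = {D[p:=Up] @ [Dn,Dn] | p. p < length D \<and> D!p = Dn} \<union> {D @ [Up,Dn]}"

lemma sym_rel: "sym {(x, y). x \<in> R \<and> y \<in> R \<and> adjacent x y}"
  unfolding sym_def adjacent_def by auto

lemma app_ext:
  assumes dD: "dyck D" and lD: "length D = 2*m" and E_def: "E = D @ [Up,Dn]"
  shows "dyck E \<and> shape_step D E"
proof -
  have lE: "length E = 2*m+2" using lD E_def by simp
  have hE: "height E x = height D x" if "x \<le> 2*m" for x
    using that lD E_def by (simp add: height_def)
  have hD2m: "height D (2*m) = 0" using dD lD by (simp add: dyck_def)
  have hE1: "height E (2*m+1) = 1"
    using height_Suc[of "2*m" E] lE hE[of "2*m"] hD2m E_def lD by (simp add: nth_append)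
  have hE2: "height E (2*m+2) = 0"
    using height_Suc[of "2*m+1" E] lE hE1 E_def lD by (simp add: nth_append)
  have dE: "dyck E"
    unfolding dyck_def
  proof (intro conjI allI impI)
    show "even (length E)" using lE by simp
    show "height E (length E) = 0" using lE hE2 by simp
    fix x assume "x \<le> length E"
    then consider "x \<le> 2*m" | "x = 2*m+1" | "x = 2*m+2" using lE by linarith
    then show "0 \<le> height E x"
      by cases (use hE dyck_nonneg[OF dD] hE1 hE2 in auto)
  qed
  have sub: "shape D \<subseteq> shape E"
  proof
    fix c assume c: "c \<in> shape D"
    obtain a b where ab: "c = (a,b)" by force
    have "nat (a+1) \<le> 2*m" using c ab lD by (auto simp: shape_def)
    then show "c \<in> shape E" using c ab lD lE hE[of "nat(a+1)"] by (auto simp: shape_def)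
  qed
  have R: "shape E - shape D = {(2*int m, 0)}"
  proof
    show "shape E - shape D \<subseteq> {(2*int m, 0)}"
    proof
      fix c assume c: "c \<in> shape E - shape D"
      obtain a b where ab: "c = (a,b)" by force
      have M: "b \<ge> 0 \<and> even (a+b) \<and> 0 \<le> a \<and> a \<le> 2*int m
      \<and> b+1 \<le> height E (nat(a+1)) \<and> \<not> (a \<le> 2*int m - 2 \<and> b+1 \<le> height D (nat(a+1)))"
        using c ab mem_diff[OF lD lE] by simp
      show "c \<in> {(2*int m, 0)}"
      proof (cases "a \<le> 2*int m - 2")
        case True
        then have "nat (a+1) \<le> 2*m" by linarith
        then show ?thesis using M True hE[of "nat(a+1)"] by simp
      next
        case False
        then consider "a = 2*int m - 1" | "a = 2*int m" using M by linarith
        then show ?thesis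
        proof cases
          case 1
          then have "nat (a+1) = 2*m" by simp
          then show ?thesis using M hE[of "2*m"] hD2m by (simp, linarith)
        next
          case 2
          then have "nat (a+1) = 2*m+1" by simp
          then show ?thesis using M hE1 ab 2 by simp
        qed
      qed
    qed
    show "{(2*int m, 0)} \<subseteq> shape E - shape D"
    proof -
      have "nat (2*int m + 1) = 2*m+1" by simp
      then show ?thesis using mem_diff[OF lD lE, of "2*int m" 0] hE1 by simp
    qed
  qed
  have "ribbon (shape E - shape D)"
    unfolding ribbon_def connected_cells_def R by auto
  then show ?thesis using dE sub lE lD by (simp add: shape_step_def)
qed


lemma flip_ext:
  assumes dD: "dyck D" and lD: "length D = 2*m" and p: "p < 2*m" "D!p = Dn"
    and E_def: "E = D[p:=Up] @ [Dn,Dn]"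
  shows "dyck E \<and> shape_step D E"
proof -
  have lE: "length E = 2*m+2" using lD E_def by simp
  have nthE: "E!t = (if t = p then Up else D!t)" if "t < 2*m" for t
    using that lD E_def by (simp add: nth_append)
  have hE: "height E x = height D x + (if p < x then 2 else 0)" if "x \<le> 2*m" for x
    using that
  proof (induction x)
    case 0 then show ?case by simp
  next
    case (Suc x)
    then have x: "x < 2*m" by simp
    have a: "height E (Suc x) = height E x + stepval (E!x)" using x lE by (simp add: height_Suc)
    have b: "height D (Suc x) = height D x + stepval (D!x)" using x lD by (simp add: height_Suc)
    show ?case
    proof (cases "x = p")
      case True then show ?thesis using a b Suc x nthE[of x] p by simp
    next
      case False then show ?thesis using a b Suc x nthE[of x] by auto
    qed
  qed
  have hD2m: "height D (2*m) = 0" using dD lD by (simp add: dyck_def)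
  have hE2m: "height E (2*m) = 2" using hE[of "2*m"] hD2m p by simp
  have hE1: "height E (2*m+1) = 1"
    using height_Suc[of "2*m" E] lE hE2m E_def lD by (simp add: nth_append)
  have hE2: "height E (2*m+2) = 0"
    using height_Suc[of "2*m+1" E] lE hE1 E_def lD by (simp add: nth_append)
  have dE: "dyck E"
    unfolding dyck_def
  proof (intro conjI allI impI)
    show "even (length E)" using lE by simp
    show "height E (length E) = 0" using lE hE2 by simp
    fix x assume "x \<le> length E"
    then consider "x \<le> 2*m" | "x = 2*m+1" | "x = 2*m+2" using lE by linarith
    then show "0 \<le> height E x"
    proof cases
      case 1 then show ?thesis using hE[of x] dyck_nonneg[OF dD, of x] by simp
    qed (use hE1 hE2 in auto)
  qed
  have sub: "shape D \<subseteq> shape E"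
  proof
    fix c assume c: "c \<in> shape D"
    obtain a b where ab: "c = (a,b)" by force
    have "nat (a+1) \<le> 2*m" using c ab lD by (auto simp: shape_def)
    then show "c \<in> shape E" using c ab lD lE hE[of "nat(a+1)"] by (auto simp: shape_def)
  qed
  define cl where "cl x = (int x - 1, height D x + 1)" for x
  define R where "R = shape E - shape D"
  have R: "R = cl ` {p<..2*m} \<union> {(2*int m, 0)}"
  proof
    show "R \<subseteq> cl ` {p<..2*m} \<union> {(2*int m, 0)}"
    proof
      fix c assume c: "c \<in> R"
      obtain a b where ab: "c = (a,b)" by force
      have M: "b \<ge> 0 \<and> even (a+b) \<and> 0 \<le> a \<and> a \<le> 2*int m
      \<and> b+1 \<le> height E (nat(a+1)) \<and> \<not> (a \<le> 2*int m - 2 \<and> b+1 \<le> height D (nat(a+1)))"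
        using c ab mem_diff[OF lD lE] R_def by simp
      define x where "x = nat (a+1)"
      have ax: "a = int x - 1" using M x_def by simp
      have Mx: "b+1 \<le> height E x" "\<not> (a \<le> 2*int m - 2 \<and> b+1 \<le> height D x)"
        using M unfolding x_def by auto
      have x21: "x \<le> 2*m+1" using M x_def by linarith
      show "c \<in> cl ` {p<..2*m} \<union> {(2*int m, 0)}"
      proof (cases "x = 2*m+1")
        case True
        then show ?thesis using M Mx hE1 ab ax by simp
      next
        case False
        then have x2: "x \<le> 2*m" using x21 by linarith
        have hx: "height E x = height D x + (if p < x then 2 else 0)" using hE[OF x2] .
        have px: "p < x"
        proof (rule ccontr)
          assume "\<not> p < x"
          then have "a \<le> 2*int m - 2" using ax p by linarith
          then show False using Mx hx \<open>\<not> p < x\<close> by simp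
        qed
        have lo: "b + 1 > height D x"
        proof (cases "a \<le> 2*int m - 2")
          case True then show ?thesis using Mx by simp
        next
          case False
          then have "x = 2*m" using ax x2 by linarith
          then show ?thesis using hD2m M by simp
        qed
        have par: "even (height D x + int x)" using height_par[of x D] x2 lD by simp
        have "b = height D x + 1"
          using lo M Mx hx px par ax by presburger
        then have "c = cl x" using ab ax cl_def by simp
        then show ?thesis using px x2 by auto
      qed
    qed
    show "cl ` {p<..2*m} \<union> {(2*int m, 0)} \<subseteq> R"
    proof
      fix c assume "c \<in> cl ` {p<..2*m} \<union> {(2*int m, 0)}"
      then consider x where "p < x" "x \<le> 2*m" "c = cl x" | "c = (2*int m, 0)" by auto
      then show "c \<in> R"
      proof cases
        case 1
        have x1: "nat (int x - 1 + 1) = x" using 1 by simp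
        have par: "even (height D x + int x)" using height_par[of x D] 1 lD by simp
        have "height D x \<ge> 0" using dyck_nonneg[OF dD] by simp
        then show ?thesis using mem_diff[OF lD lE, of "int x - 1" "height D x + 1"] 1 x1 par hE[of x]
          unfolding R_def cl_def by simp
      next
        case 2
        have "nat (2*int m + 1) = 2*m+1" by simp
        then show ?thesis using 2 mem_diff[OF lD lE, of "2*int m" 0] hE1 R_def by simp
      qed
    qed
  qed
  have col: "snd c = snd d" if "c \<in> R" "d \<in> R" "fst c = fst d" for c d
    using that unfolding R cl_def by auto
  have no4: "\<not> (\<exists>a b. (a, b) \<in> R \<and> (a + 1, b + 1) \<in> R \<and> (a + 1, b - 1) \<in> R \<and> (a + 2, b) \<in> R)"
    using col by force
  define Rel where "Rel = {(x, y). x \<in> R \<and> y \<in> R \<and> adjacent x y}"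
  have e0: "(2*int m, 0) \<in> R" using R by auto
  have reach: "\<forall>x. 2*m - x = d \<longrightarrow> p < x \<longrightarrow> x \<le> 2*m \<longrightarrow> (cl x, (2*int m, 0)) \<in> Rel\<^sup>*" for d
  proof (induction d)
    case 0
    show ?case
    proof (intro allI impI)
      fix x assume "2*m - x = 0" "p < x" "x \<le> 2*m"
      then have x: "x = 2*m" by simp
      have "cl x \<in> R" using R \<open>p<x\<close> \<open>x \<le> 2*m\<close> by auto
      moreover have "adjacent (cl x) (2*int m, 0)" using x hD2m p unfolding cl_def adjacent_def by simp
      ultimately show "(cl x, (2*int m, 0)) \<in> Rel\<^sup>*" using e0 Rel_def by auto
    qed
  next
    case (Suc d)
    show ?case
    proof (intro allI impI)
      fix x assume x: "2*m - x = Suc d" "p < x" "x \<le> 2*m"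
      then have "(cl (Suc x), (2*int m, 0)) \<in> Rel\<^sup>*" using Suc.IH by auto
      moreover have "cl x \<in> R" "cl (Suc x) \<in> R" using R x by auto
      moreover have "adjacent (cl x) (cl (Suc x))"
      proof -
        have "x < length D" using x lD by simp
        then have "height D (Suc x) = height D x + stepval (D!x)" by (simp add: height_Suc)
        then show ?thesis using stepval_cases[of "D!x"] unfolding cl_def adjacent_def by auto
      qed
      ultimately show "(cl x, (2*int m, 0)) \<in> Rel\<^sup>*"
        using Rel_def by (auto intro: converse_rtrancl_into_rtrancl)
    qed
  qed
  have toe: "(c, (2*int m, 0)) \<in> Rel\<^sup>*" if "c \<in> R" for c
  proof -
    from that consider x where "p < x" "x \<le> 2*m" "c = cl x" | "c = (2*int m, 0)" using R by auto
    then show ?thesis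
    proof cases
      case 1 then show ?thesis using reach[of "2*m - x"] by auto
    qed simp
  qed
  have symR: "sym (Rel\<^sup>*)" using sym_rel[of R] Rel_def by (simp add: sym_rtrancl)
  have conn: "connected_cells R"
    unfolding connected_cells_def
  proof (intro ballI)
    fix c d assume "c \<in> R" "d \<in> R"
    then have "(c, (2*int m, 0)) \<in> Rel\<^sup>*" "(d, (2*int m, 0)) \<in> Rel\<^sup>*"
      using toe by auto
    then have "(c, (2*int m, 0)) \<in> Rel\<^sup>*" "((2*int m, 0), d) \<in> Rel\<^sup>*"
      using symR by (auto dest: symD)
    then show "(c, d) \<in> {(x, y). x \<in> R \<and> y \<in> R \<and> adjacent x y}\<^sup>*"
      using Rel_def by (meson rtrancl_trans)
  qed
  have "ribbon R" unfolding ribbon_def using conn no4 e0 by auto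
  then show ?thesis using dE sub lE lD R_def by (simp add: shape_step_def)
qed


lemma sv_diff: "t < length E \<Longrightarrow> stepval (E!t) = height E (Suc t) - height E t"
  by (simp add: height_Suc)

lemma B_fwd:
  assumes dD: "dyck D" and lD: "length D = 2*m" and dE: "dyck E" and st: "shape_step D E"
  shows "E \<in> Bset D"
proof -
  have lE: "length E = 2*m+2" using st lD by (simp add: shape_step_def)
  have sub: "shape D \<subseteq> shape E" and rib: "ribbon (shape E - shape D)"
    using st by (auto simp: shape_step_def)
  define R where "R = shape E - shape D"
  have memR: "(a,b) \<in> R \<longleftrightarrow> (b \<ge> 0 \<and> even (a+b) \<and> 0 \<le> a \<and> a \<le> 2*int m
      \<and> b+1 \<le> height E (nat(a+1)) \<and> \<not> (a \<le> 2*int m - 2 \<and> b+1 \<le> height D (nat(a+1))))" for a b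
    unfolding R_def using mem_diff[OF lD lE] by simp
  have hD2m: "height D (2*m) = 0" using dD lD by (simp add: dyck_def)
  have nD: "height D x \<ge> 0" for x using dyck_nonneg[OF dD] .
  have nE: "height E x \<ge> 0" for x using dyck_nonneg[OF dE] .
  have parD: "even (height D x + int x)" if "x \<le> 2*m" for x using height_par[of x D] that lD by simp
  have parE: "even (height E x + int x)" if "x \<le> 2*m+2" for x using height_par[of x E] that lE by simp
  have sD: "\<bar>height D (Suc x) - height D x\<bar> \<le> 1" for x by (rule height_step)
  have sE: "\<bar>height E (Suc x) - height E x\<bar> \<le> 1" for x by (rule height_step)
  have tl: "height E (Suc (2*m)) = 1 \<and> E!(Suc (2*m)) = Dn \<and>
     ((height E (2*m) = 0 \<and> E!(2*m) = Up) \<or> (height E (2*m) = 2 \<and> E!(2*m) = Dn))"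
    using dyck_tail[OF dE, of "2*m"] lE by simp
  have ge: "height D x \<le> height E x" if x: "x \<le> 2*m" for x
  proof (rule ccontr)
    assume H: "\<not> height D x \<le> height E x"
    have x1: "1 \<le> x" using H by (cases x) auto
    have x2: "x < 2*m" using H hD2m nE x by (cases "x = 2*m") auto
    have "(int x - 1, height D x - 1) \<in> shape D"
      unfolding shape_def using H nE[of x] x1 x2 lD parD[of x] x by auto
    then have "(int x - 1, height D x - 1) \<in> shape E" using sub by auto
    then show False using H x1 by (simp add: shape_def)
  qed
  have le2: "height E x \<le> height D x + 2" if x: "x \<le> 2*m" for x
  proof (rule ccontr)
    assume H: "\<not> height E x \<le> height D x + 2"
    have pp: "even (height E x - height D x)" proof -
      have "even (height D x + int x)" "even (height E x + int x)" using parD[of x] parE[of x] x by simp_all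
      then show ?thesis by presburger
    qed
    then have H4: "height E x \<ge> height D x + 4" using H by presburger
    have x0: "x \<noteq> 0" using H by (cases x) auto
    have x1: "x \<noteq> 1" using H4 sE[of 0] nD[of 1] by auto
    have xm: "x \<noteq> 2*m" using H4 tl hD2m by auto
    have x2: "2 \<le> x" "x < 2*m" using x0 x1 xm x by auto
    define y where "y = height D x + 2"
    define a where "a = int x - 2"
    have Em: "height E (x-1) \<ge> height E x - 1" using sE[of "x-1"] x2 by simp
    have Dm: "height D (x-1) \<le> height D x + 1" using sD[of "x-1"] x2 by simp
    have Ep: "height E (x+1) \<ge> height E x - 1" using sE[of x] by simp
    have Dp: "height D (x+1) \<le> height D x + 1" using sD[of x] by simp
    have n1: "nat (a+1) = x - 1" using x2 a_def by simp
    have n2: "nat (a+1+1) = x" using x2 a_def by simp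
    have n3: "nat (a+2+1) = x + 1" using x2 a_def by simp
    have pD: "even (height D x + int x)" using parD x by simp
    have c1: "(a, y) \<in> R" unfolding memR n1 using Em Dm H4 pD x2 nD[of x] a_def y_def by auto
    have c2: "(a+1, y+1) \<in> R" unfolding memR n2 using H4 pD x2 nD[of x] a_def y_def by auto
    have c3: "(a+1, y-1) \<in> R" unfolding memR n2 using H4 pD x2 nD[of x] a_def y_def by auto
    have c4: "(a+2, y) \<in> R" unfolding memR n3 using Ep Dp H4 pD x2 nD[of x] a_def y_def by auto
    show False using rib c1 c2 c3 c4 unfolding ribbon_def R_def by blast
  qed
  have C: "height E x = height D x \<or> height E x = height D x + 2" if x: "x \<le> 2*m" for x
  proof -
    have "even (height E x - height D x)" proof -
      have "even (height D x + int x)" "even (height E x + int x)" using parD[of x] parE[of x] x by simp_all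
      then show ?thesis by presburger
    qed
    then show ?thesis using ge[OF x] le2[OF x] by presburger
  qed
  define Rel where "Rel = {(x, y). x \<in> R \<and> y \<in> R \<and> adjacent x y}"
  have e0: "(2*int m, 0) \<in> R"
  proof -
    have "nat (2*int m + 1) = Suc (2*m)" by simp
    then show ?thesis unfolding memR using tl by simp
  qed
  have up: "height E (Suc x) = height D (Suc x) + 2"
    if x: "1 \<le> x" "x < 2*m" "height E x = height D x + 2" for x
  proof (rule ccontr)
    assume "height E (Suc x) \<noteq> height D (Suc x) + 2"
    then have eq: "height E (Suc x) = height D (Suc x)" using C[of "Suc x"] x by auto
    define c0 where "c0 = (int x - 1, height D x + 1)"
    have c0R: "c0 \<in> R" unfolding c0_def memR using x parD[of x] nD[of x] by simp
    have "(c0, (2*int m, 0)) \<in> Rel\<^sup>*"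
      using rib c0R e0 unfolding ribbon_def connected_cells_def Rel_def R_def by blast
    then have "fst (2*int m, 0::int) \<le> int x - 1"
    proof (induction rule: rtrancl_induct)
      case base then show ?case by (simp add: c0_def)
    next
      case (step c d)
      then have dR: "d \<in> R" and adj: "adjacent c d" by (auto simp: Rel_def)
      obtain a b where ab: "d = (a,b)" by force
      have "a \<le> int x" using adj step.IH ab by (auto simp: adjacent_def)
      moreover have "a \<noteq> int x"
      proof
        assume ax: "a = int x"
        have n: "nat (a+1) = Suc x" using ax by simp
        have M: "b \<ge> 0" "b+1 \<le> height E (Suc x)" "\<not> (a \<le> 2*int m - 2 \<and> b+1 \<le> height D (Suc x))"
          using dR ab memR[of a b] n by auto
        show False
        proof (cases "a \<le> 2*int m - 2")
          case True then show False using M eq by simp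
        next
          case False
          then have "Suc x = 2*m" using ax x by linarith
          then show False using M eq hD2m by simp
        qed
      qed
      ultimately show ?case using ab by simp
    qed
    then show False using x by simp
  qed
  have upto: "height E (x + d) = height D (x + d) + 2"
    if "1 \<le> x" "x + d \<le> 2*m" "height E x = height D x + 2" for x d
    using that
  proof (induction d)
    case 0 then show ?case by simp
  next
    case (Suc d)
    then have "height E (x + d) = height D (x + d) + 2" by simp
    then show ?case using up[of "x+d"] Suc.prems by simp
  qed
  show ?thesis
  proof (cases "height E (2*m) = 2")
    case False
    then have e2m: "E!(2*m) = Up" "height E (2*m) = 0" using tl by auto
    have eqh: "height E x = height D x" if x: "x \<le> 2*m" for x
    proof (rule ccontr)
      assume "height E x \<noteq> height D x"
      then have h2: "height E x = height D x + 2" using C x by auto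
      then have "x \<noteq> 0" by (cases x) auto
      then have "height E (x + (2*m - x)) = height D (x + (2*m-x)) + 2"
        using upto[of x "2*m - x"] x h2 by simp
      then show False using x e2m hD2m by simp
    qed
    have "E = D @ [Up, Dn]"
    proof (rule nth_equalityI)
      show "length E = length (D @ [Up,Dn])" using lE lD by simp
      fix t assume t: "t < length E"
      consider "t < 2*m" | "t = 2*m" | "t = 2*m+1" using t lE by linarith
      then show "E!t = (D @ [Up,Dn])!t"
      proof cases
        case 1
        have "stepval (E!t) = stepval (D!t)"
          using sv_diff[of t E] sv_diff[of t D] 1 lE lD eqh[of t] eqh[of "Suc t"] by simp
        then show ?thesis using 1 lD stepval_inj by (simp add: nth_append)
      qed (use e2m tl lD in \<open>auto simp: nth_append\<close>)
    qed
    then show ?thesis unfolding Bset_def by auto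
  next
    case True
    define q where "q = (LEAST x. height E x = height D x + 2)"
    have q1: "height E q = height D q + 2" unfolding q_def
      by (rule LeastI[of _ "2*m"]) (use True hD2m in simp)
    have q2: "q \<le> 2*m" unfolding q_def by (rule Least_le) (use True hD2m in simp)
    have q0: "q \<noteq> 0" using q1 by (cases q) auto
    have below: "height E x = height D x" if "x < q" for x
      using C[of x] not_less_Least[of x "\<lambda>x. height E x = height D x + 2"] that q2
      unfolding q_def[symmetric] by auto
    have above: "height E x = height D x + 2" if "q \<le> x" "x \<le> 2*m" for x
      using upto[of q "x - q"] that q0 q1 by simp
    define p where "p = q - 1"
    have hx: "height E x = height D x + (if p < x then 2 else 0)" if "x \<le> 2*m" for x
      using below above that q0 unfolding p_def by (cases "q \<le> x") auto
    have svt: "stepval (E!t) = stepval (D!t) + (if t = p then 2 else 0)" if t: "t < 2*m" for t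
      using sv_diff[of t E] sv_diff[of t D] t lE lD hx[of t] hx[of "Suc t"] by auto
    have pm: "p < 2*m" using q2 q0 p_def by simp
    have Dp: "D!p = Dn" and Ep: "E!p = Up" using svt[OF pm]
      by (cases "D!p"; cases "E!p"; simp)+
    have "E = D[p:=Up] @ [Dn, Dn]"
    proof (rule nth_equalityI)
      show "length E = length (D[p:=Up] @ [Dn,Dn])" using lE lD by simp
      fix t assume t: "t < length E"
      consider "t < 2*m" | "t = 2*m" | "t = 2*m+1" using t lE by linarith
      then show "E!t = (D[p:=Up] @ [Dn,Dn])!t"
      proof cases
        case 1
        show ?thesis
        proof (cases "t = p")
          case True then show ?thesis using Ep 1 lD by (simp add: nth_append)
        next
          case False
          then have "stepval (E!t) = stepval (D!t)" using svt[OF 1] by simp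
          then show ?thesis using 1 lD stepval_inj False by (simp add: nth_append)
        qed
      qed (use True tl lD in \<open>auto simp: nth_append\<close>)
    qed
    then show ?thesis unfolding Bset_def using Dp pm lD by auto
  qed
qed


lemma B_iff:
  assumes "dyck D" "length D = 2*m"
  shows "(dyck E \<and> shape_step D E) \<longleftrightarrow> E \<in> Bset D"
proof
  assume "dyck E \<and> shape_step D E" then show "E \<in> Bset D" using B_fwd assms by blast
next
  assume "E \<in> Bset D"
  then consider p where "p < 2*m" "D!p = Dn" "E = D[p:=Up] @ [Dn,Dn]" | "E = D @ [Up,Dn]"
    using assms unfolding Bset_def by auto
  then show "dyck E \<and> shape_step D E"
    by cases (use flip_ext app_ext assms in blast)+
qed

section \<open>Permutations\<close>

definition ins :: "nat \<Rightarrow> nat list \<Rightarrow> nat \<Rightarrow> nat list" where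
  "ins k xs v = take k xs @ v # drop k xs"
definition Lf :: "nat list \<Rightarrow> nat \<Rightarrow> nat" where
  "Lf xs i = (if i = 0 then 0 else xs!(i-1))"
definition Rf :: "nat list \<Rightarrow> nat \<Rightarrow> nat" where
  "Rf xs i = (if Suc i < length xs then xs!(Suc i) else Suc (length xs))"
definition st :: "bool \<Rightarrow> step" where
  "st b = (if b then Up else Dn)"

lemma perms_elem: "xs \<in> perms n \<Longrightarrow> i < n \<Longrightarrow> 1 \<le> xs!i \<and> xs!i \<le> n"
  unfolding perms_def using nth_mem[of i xs] by auto

lemma perms_inj: "xs \<in> perms n \<Longrightarrow> i < n \<Longrightarrow> j < n \<Longrightarrow> xs!i = xs!j \<Longrightarrow> i = j"
  unfolding perms_def using nth_eq_iff_index_eq by auto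

lemma perms_ex: assumes "xs \<in> perms n" "1 \<le> j" "j \<le> n" shows "\<exists>i<n. xs!i = j"
proof -
  have "j \<in> set xs" using assms by (simp add: perms_def)
  then obtain i where "i < length xs" "xs!i = j" by (auto simp: in_set_conv_nth)
  then show ?thesis using assms by (auto simp: perms_def)
qed

lemma pos_nth: assumes "xs \<in> perms n" "i < n" shows "pos xs (xs!i) = Suc i"
  unfolding pos_def
proof (rule the_equality)
  show "1 \<le> Suc i \<and> Suc i \<le> length xs \<and> xs ! (Suc i - 1) = xs ! i" using assms by (simp add: perms_def)
next
  fix i' assume "1 \<le> i' \<and> i' \<le> length xs \<and> xs ! (i' - 1) = xs ! i"
  then show "i' = Suc i" using perms_inj[OF assms(1), of "i'-1" i] assms by (auto simp: perms_def)
qed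

lemma letters_nth:
  assumes P: "xs \<in> perms n" and i: "i < n"
  shows "letters xs (xs!i) = [st (xs!i < Rf xs i), st (xs!i < Lf xs i)]"
proof -
  have len: "length xs = n" using P by (simp add: perms_def)
  have ps: "pos xs (xs!i) = Suc i" using pos_nth[OF P i] .
  have sl: "sig xs (Suc i - 1) = Lf xs i" using len i by (simp add: sig_def Lf_def)
  have sr: "sig xs (Suc i + 1) = Rf xs i" using len i by (simp add: sig_def Rf_def)
  have e: "1 \<le> xs!i" "xs!i \<le> n" using perms_elem[OF P i] by auto
  have ln: "Lf xs i \<noteq> xs!i"
  proof (cases i)
    case 0 then show ?thesis using e by (simp add: Lf_def)
  next
    case (Suc k) then show ?thesis using perms_inj[OF P, of k i] i by (auto simp: Lf_def)
  qed
  have rn: "Rf xs i \<noteq> xs!i"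
    using e perms_inj[OF P, of "Suc i" i] i len unfolding Rf_def by auto
  show ?thesis
    unfolding letters_def is_valley_def is_peak_def is_dasc_def is_ddes_def Let_def ps sl sr st_def
    using ln rn by auto
qed

lemma concat_map2:
  assumes "\<And>j. length (f j) = 2"
  shows "concat (map f [Suc 0..<Suc n]) = map (\<lambda>t. f (t div 2 + 1) ! (t mod 2)) [0..<2*n]"
proof (induction n)
  case 0 then show ?case by simp
next
  case (Suc n)
  have fn: "f (Suc n) = [f (Suc n)!0, f (Suc n)!1]"
    using assms[of "Suc n"] by (cases "f (Suc n)") (auto simp: length_Suc_conv)
  have u: "[0..<2*Suc n] = [0..<2*n] @ [2*n, 2*n+1]"
  proof -
    have "2*Suc n = Suc (Suc (2*n))" by simp
    then show ?thesis by (simp only: upt_Suc) simp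
  qed
  have v: "[Suc 0..<Suc (Suc n)] = [Suc 0..<Suc n] @ [Suc n]" by simp
  have g1: "(2*n) div 2 + 1 = Suc n" "(2*n) mod 2 = 0" by simp_all
  have g2: "(2*n+1) div 2 + 1 = Suc n" "(2*n+1) mod 2 = 1" by simp_all
  show ?case unfolding v u using Suc.IH fn g1 g2
    by (simp only: map_append concat_append list.map concat.simps append_Nil2)
qed

lemma length_letters: "length (letters xs j) = 2" by (simp add: letters_def)

lemma profile_alt: "profile xs = map (\<lambda>t. letters xs (t div 2 + 1) ! (t mod 2)) [0..<2*length xs]"
  unfolding profile_def using concat_map2[of "letters xs" "length xs", OF length_letters] by simp

lemma length_profile: "length (profile xs) = 2 * length xs"
  by (simp add: profile_alt)

lemma profile_nth: "t < 2*length xs \<Longrightarrow> profile xs ! t = letters xs (t div 2 + 1) ! (t mod 2)"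
  by (simp add: profile_alt)



lemma ins_len: "k \<le> length xs \<Longrightarrow> length (ins k xs v) = Suc (length xs)"
  by (simp add: ins_def)

lemma ins_nth: "k \<le> length xs \<Longrightarrow> i \<le> length xs \<Longrightarrow>
   ins k xs v ! i = (if i < k then xs!i else if i = k then v else xs!(i-1))"
  by (auto simp: ins_def nth_append min_def)

lemma ins_perm: assumes P: "\<tau> \<in> perms m" and k: "k \<le> m" shows "ins k \<tau> (Suc m) \<in> perms (Suc m)"
proof -
  have l: "length \<tau> = m" "distinct \<tau>" "set \<tau> = {1..m}" using P by (auto simp: perms_def)
  have s: "set (ins k \<tau> (Suc m)) = insert (Suc m) (set \<tau>)"
    unfolding ins_def using set_append[of "take k \<tau>" "drop k \<tau>"] by (simp add: append_take_drop_id)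
  have d: "distinct (ins k \<tau> (Suc m))"
  proof -
    have a: "distinct (take k \<tau> @ drop k \<tau>)" using l by simp
    have b: "Suc m \<notin> set (take k \<tau>)" "Suc m \<notin> set (drop k \<tau>)" using l
      by (auto dest: in_set_takeD in_set_dropD)
    show ?thesis unfolding ins_def using a b by (simp only: distinct_append distinct.simps set_append) simp
  qed
  show ?thesis unfolding perms_def using s d l k by (auto simp: ins_len)
qed

lemma del_ins: assumes P: "\<tau> \<in> perms m" and k: "k \<le> m" shows "del_max (ins k \<tau> (Suc m)) = \<tau>"
proof -
  have l: "length \<tau> = m" "set \<tau> = {1..m}" using P by (auto simp: perms_def)
  have ft: "filter (\<lambda>x. x \<noteq> Suc m) xs = xs" if "set xs \<subseteq> set \<tau>" for xs
    using that l by (auto simp: filter_id_conv)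
  have "del_max (ins k \<tau> (Suc m)) = filter (\<lambda>x. x \<noteq> Suc m) (take k \<tau>) @ filter (\<lambda>x. x \<noteq> Suc m) (drop k \<tau>)"
    unfolding del_max_def using ins_len[of k \<tau> "Suc m"] l k by (simp add: ins_def)
  also have "\<dots> = \<tau>" using ft[of "take k \<tau>"] ft[of "drop k \<tau>"] set_take_subset[of k \<tau>] set_drop_subset[of k \<tau>] by simp
  finally show ?thesis .
qed

lemma perm_decomp: assumes P: "\<sigma> \<in> perms (Suc m)"
  shows "\<exists>\<tau>\<in>perms m. \<exists>k\<le>m. \<sigma> = ins k \<tau> (Suc m)"
proof -
  have l: "length \<sigma> = Suc m" "distinct \<sigma>" "set \<sigma> = {1..Suc m}" using P by (auto simp: perms_def)
  then have "Suc m \<in> set \<sigma>" by simp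
  then obtain A B where AB: "\<sigma> = A @ Suc m # B" by (meson split_list)
  define \<tau> where "\<tau> = A @ B"
  have len: "length A + length B = m" using l(1) unfolding AB by simp
  have dis: "distinct (A @ Suc m # B)" using l(2) unfolding AB .
  have st: "set (A @ Suc m # B) = {1..Suc m}" using l(3) unfolding AB .
  have t1: "length \<tau> = m" using len \<tau>_def by simp
  have t2: "distinct \<tau>" using dis \<tau>_def by simp
  have nA: "Suc m \<notin> set A" "Suc m \<notin> set B" using dis by auto
  have t3: "set \<tau> = {1..m}"
  proof -
    have s1: "insert (Suc m) (set \<tau>) = {1..Suc m}" using st \<tau>_def by simp
    have "set \<tau> = {1..Suc m} - {Suc m}" using s1[symmetric] nA \<tau>_def by auto
    also have "\<dots> = {1..m}" by auto
    finally show ?thesis .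
  qed
  have tp: "\<tau> \<in> perms m" using t1 t2 t3 by (simp add: perms_def)
  have "ins (length A) \<tau> (Suc m) = \<sigma>" using AB \<tau>_def by (simp add: ins_def)
  moreover have "length A \<le> m" using len by simp
  ultimately show ?thesis using tp by (intro bexI[of _ \<tau>] exI[of _ "length A"]) auto
qed

lemma pc_snoc:
  assumes "length xs = Suc m" "length (del_max xs) = m"
  shows "profile_chain xs = profile_chain (del_max xs) @ [profile xs]"
proof -
  have "profile_chain xs = map (\<lambda>i. profile ((del_max ^^ (m - i)) xs)) [0..<m] @ [profile xs]"
    unfolding profile_chain_def using assms by simp
  also have "map (\<lambda>i. profile ((del_max ^^ (m - i)) xs)) [0..<m] = profile_chain (del_max xs)"
    unfolding profile_chain_def assms(2)
  proof (rule map_cong)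
    fix i assume "i \<in> set [0..<m]"
    then have "m - i = Suc (m - 1 - i)" by auto
    then show "profile ((del_max ^^ (m - i)) xs) = profile ((del_max ^^ (m - 1 - i)) (del_max xs))"
      by (simp only: funpow_Suc_right o_apply)
  qed simp
  finally show ?thesis .
qed

lemma pc_len: "length (profile_chain xs) = length xs" by (simp add: profile_chain_def)

lemma pc_last: "xs \<noteq> [] \<Longrightarrow> profile_chain xs ! (length xs - 1) = profile xs"
  by (simp add: profile_chain_def)



lemma ins_letters:
  assumes P: "\<tau> \<in> perms m" and k: "k \<le> m" and i: "i < m"
  shows "letters (ins k \<tau> (Suc m)) (\<tau>!i) =
     [if Suc i = k then Up else letters \<tau> (\<tau>!i) ! 0, if i = k then Up else letters \<tau> (\<tau>!i) ! 1]"
proof -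
  define \<sigma> where "\<sigma> = ins k \<tau> (Suc m)"
  have lt: "length \<tau> = m" using P by (simp add: perms_def)
  have Ps: "\<sigma> \<in> perms (Suc m)" using ins_perm[OF P k] \<sigma>_def by simp
  have ls: "length \<sigma> = Suc m" using Ps by (simp add: perms_def)
  have sn: "\<sigma>!i' = (if i' < k then \<tau>!i' else if i' = k then Suc m else \<tau>!(i'-1))" if "i' \<le> m" for i'
    using ins_nth[of k \<tau> i' "Suc m"] that lt k \<sigma>_def by simp
  have e: "\<tau>!i \<le> m" using perms_elem[OF P i] by simp
  define i' where "i' = (if i < k then i else Suc i)"
  have i'm: "i' < Suc m" using i i'_def by simp
  have si: "\<sigma>!i' = \<tau>!i" using sn[of i'] i'm i'_def by auto
  have Ls: "letters \<sigma> (\<tau>!i) = [st (\<tau>!i < Rf \<sigma> i'), st (\<tau>!i < Lf \<sigma> i')]"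
    using letters_nth[OF Ps i'm] si by simp
  have Lt: "letters \<tau> (\<tau>!i) = [st (\<tau>!i < Rf \<tau> i), st (\<tau>!i < Lf \<tau> i)]"
    using letters_nth[OF P i] .
  have R: "(\<tau>!i < Rf \<sigma> i') = (if Suc i = k then True else \<tau>!i < Rf \<tau> i)"
  proof (cases "i < k")
    case True
    then have ii: "i' = i" using i'_def by simp
    show ?thesis
    proof (cases "Suc i = k")
      case True
      then show ?thesis using ii ls sn[of "Suc i"] k e by (simp add: Rf_def)
    next
      case False
      then have "Suc i < k" using \<open>i < k\<close> by simp
      then show ?thesis using ii ls lt sn[of "Suc i"] k by (simp add: Rf_def)
    qed
  next
    case False
    then have ii: "i' = Suc i" using i'_def by simp
    show ?thesis
    proof (cases "Suc (Suc i) < Suc m")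
      case True
      then show ?thesis using ii ls lt sn[of "Suc (Suc i)"] False by (simp add: Rf_def)
    next
      case False
      then show ?thesis using ii ls lt e \<open>\<not> i < k\<close> by (simp add: Rf_def)
    qed
  qed
  have L: "(\<tau>!i < Lf \<sigma> i') = (if i = k then True else \<tau>!i < Lf \<tau> i)"
  proof (cases "i < k")
    case True
    then have ii: "i' = i" using i'_def by simp
    show ?thesis
    proof (cases i)
      case 0 then show ?thesis using ii True by (simp add: Lf_def)
    next
      case (Suc j) then show ?thesis using ii True sn[of j] i by (simp add: Lf_def)
    qed
  next
    case False
    then have ii: "i' = Suc i" using i'_def by simp
    show ?thesis
    proof (cases "i = k")
      case True then show ?thesis using ii sn[of i] i e by (simp add: Lf_def)
    next
      case False
      then have "k < i" using \<open>\<not> i < k\<close> by simp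
      then show ?thesis using ii sn[of i] i by (simp add: Lf_def)
    qed
  qed
  show ?thesis unfolding \<sigma>_def[symmetric] Ls Lt R L by (simp add: st_def)
qed


lemma prof_tau:
  assumes P: "\<tau> \<in> perms m" and i: "i < m"
  shows "profile \<tau> ! (2*(\<tau>!i - 1)) = st (\<tau>!i < Rf \<tau> i)"
    "profile \<tau> ! (2*(\<tau>!i - 1) + 1) = st (\<tau>!i < Lf \<tau> i)"
proof -
  have lt: "length \<tau> = m" using P by (simp add: perms_def)
  have e: "1 \<le> \<tau>!i" "\<tau>!i \<le> m" using perms_elem[OF P i] by auto
  have a: "(2*(\<tau>!i - 1)) div 2 + 1 = \<tau>!i" "(2*(\<tau>!i - 1)) mod 2 = 0" using e by auto
  have b: "(2*(\<tau>!i - 1) + 1) div 2 + 1 = \<tau>!i" "(2*(\<tau>!i - 1) + 1) mod 2 = 1" using e by auto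
  show "profile \<tau> ! (2*(\<tau>!i - 1)) = st (\<tau>!i < Rf \<tau> i)"
    using profile_nth[of "2*(\<tau>!i - 1)" \<tau>] a e lt letters_nth[OF P i] by simp
  show "profile \<tau> ! (2*(\<tau>!i - 1) + 1) = st (\<tau>!i < Lf \<tau> i)"
    using profile_nth[of "2*(\<tau>!i - 1) + 1" \<tau>] b e lt letters_nth[OF P i] by simp
qed

definition g :: "nat list \<Rightarrow> nat \<Rightarrow> nat" where
  "g \<tau> k = (if k = 0 then 2*(\<tau>!0 - 1)+1 else if \<tau>!(k-1) < \<tau>!k then 2*(\<tau>!k - 1)+1 else 2*(\<tau>!(k-1) - 1))"

lemma g_prop:
  assumes P: "\<tau> \<in> perms m" and k: "k < m"
  shows "g \<tau> k < 2*m \<and> profile \<tau> ! g \<tau> k = Dn"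
proof -
  have eb: "1 \<le> \<tau>!k" "\<tau>!k \<le> m" using perms_elem[OF P k] by auto
  show ?thesis
  proof (cases "k = 0")
    case True
    then show ?thesis using prof_tau(2)[OF P k] eb unfolding g_def by (simp add: Lf_def st_def)
  next
    case False
    have k1: "k - 1 < m" using k by simp
    have ea: "1 \<le> \<tau>!(k-1)" "\<tau>!(k-1) \<le> m" using perms_elem[OF P k1] by auto
    have ne: "\<tau>!(k-1) \<noteq> \<tau>!k" using perms_inj[OF P k1 k] False by auto
    have lt: "length \<tau> = m" using P by (simp add: perms_def)
    have Rk: "Rf \<tau> (k-1) = \<tau>!k" using False k lt by (simp add: Rf_def)
    have Lk: "Lf \<tau> k = \<tau>!(k-1)" using False by (simp add: Lf_def)
    show ?thesis
    proof (cases "\<tau>!(k-1) < \<tau>!k")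
      case True
      then show ?thesis using prof_tau(2)[OF P k] eb False Lk unfolding g_def by (simp add: st_def)
    next
      case F2: False
      then show ?thesis using prof_tau(1)[OF P k1] ea False Rk ne unfolding g_def by (simp add: st_def)
    qed
  qed
qed


lemma prof_ins:
  assumes P: "\<tau> \<in> perms m" and k: "k \<le> m"
  shows "profile (ins k \<tau> (Suc m)) =
    (if k = m then profile \<tau> @ [Up,Dn] else (profile \<tau>)[g \<tau> k := Up] @ [Dn,Dn])"
    (is "?L = ?R")
proof (rule nth_equalityI)
  define \<sigma> where "\<sigma> = ins k \<tau> (Suc m)"
  have lt: "length \<tau> = m" using P by (simp add: perms_def)
  have Ps: "\<sigma> \<in> perms (Suc m)" using ins_perm[OF P k] \<sigma>_def by simp
  have ls: "length \<sigma> = Suc m" using Ps by (simp add: perms_def)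
  have sn: "\<sigma>!i' = (if i' < k then \<tau>!i' else if i' = k then Suc m else \<tau>!(i'-1))" if "i' \<le> m" for i'
    using ins_nth[of k \<tau> i' "Suc m"] that lt k \<sigma>_def by simp
  have lP: "length (profile \<tau>) = 2*m" using lt by (simp add: length_profile)
  show "length ?L = length ?R" using ls lP \<sigma>_def by (simp add: length_profile)
  fix t assume "t < length ?L"
  then have t: "t < 2*m+2" using ls \<sigma>_def by (simp add: length_profile)
  have pn: "?L ! t = letters \<sigma> (t div 2 + 1) ! (t mod 2)"
    using profile_nth[of t \<sigma>] t ls \<sigma>_def by simp
  show "?L ! t = ?R ! t"
  proof (cases "t < 2*m")
    case True
    define j where "j = t div 2 + 1"
    have j: "1 \<le> j" "j \<le> m" using True j_def by auto
    obtain i where i: "i < m" "\<tau>!i = j" using perms_ex[OF P j] by blast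
    have tj: "t = 2*(\<tau>!i - 1) + t mod 2" using i j_def by simp
    have Rt: "?R ! t = (if k = m then profile \<tau> ! t else if t = g \<tau> k then Up else profile \<tau> ! t)"
      using True lP by (simp add: nth_append)
    have pt: "profile \<tau> ! t = letters \<tau> (\<tau>!i) ! (t mod 2)"
      using profile_nth[of t \<tau>] True lt i j_def by simp
    have Lt: "?L ! t = [if Suc i = k then Up else letters \<tau> (\<tau>!i) ! 0,
                        if i = k then Up else letters \<tau> (\<tau>!i) ! 1] ! (t mod 2)"
      using pn ins_letters[OF P k i(1)] i j_def \<sigma>_def by simp
    have LT: "letters \<tau> (\<tau>!i) = [st (\<tau>!i < Rf \<tau> i), st (\<tau>!i < Lf \<tau> i)]"
      using letters_nth[OF P i(1)] .
    have ei: "1 \<le> \<tau>!i" "\<tau>!i \<le> m" using perms_elem[OF P i(1)] by auto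
    show ?thesis
    proof (cases "t mod 2 = 0")
      case ev: True
      have tt: "t = 2*(\<tau>!i - 1)" using tj ev by simp
      have L0: "?L ! t = (if Suc i = k then Up else profile \<tau> ! t)" using Lt pt ev by simp
      show ?thesis
      proof (cases "k = m")
        case True
        have "Suc i = k \<Longrightarrow> profile \<tau> ! t = Up" using pt ev LT True lt ei by (simp add: Rf_def st_def)
        then show ?thesis using L0 Rt True by auto
      next
        case km: False
        show ?thesis
        proof (cases "Suc i = k")
          case True
          have k1: "k - 1 = i" using True by simp
          have km': "k < m" using km k by simp
          have eb: "1 \<le> \<tau>!k" using perms_elem[OF P km'] by simp
          have ne: "\<tau>!i \<noteq> \<tau>!k" using perms_inj[OF P i(1) km'] True by auto
          have Rk: "Rf \<tau> i = \<tau>!k" using True km' lt by (simp add: Rf_def)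
          show ?thesis
          proof (cases "\<tau>!i < \<tau>!k")
            case True
            then have "profile \<tau> ! t = Up" using pt ev LT Rk by (simp add: st_def)
            then show ?thesis using L0 Rt km by auto
          next
            case False
            then have "t = g \<tau> k" using tt k1 \<open>Suc i = k\<close> unfolding g_def by auto
            then show ?thesis using L0 Rt km \<open>Suc i = k\<close> by simp
          qed
        next
          case False
          have "t \<noteq> g \<tau> k"
          proof
            assume tg: "t = g \<tau> k"
            have k0: "k \<noteq> 0" using tg ev unfolding g_def by (auto split: if_splits)
            have k1: "k - 1 < m" using k k0 by simp
            have "\<not> \<tau>!(k-1) < \<tau>!k" using tg ev k0 unfolding g_def by (auto split: if_splits)
            then have "t = 2*(\<tau>!(k-1) - 1)" using tg k0 unfolding g_def by simp
            then have "\<tau>!(k-1) = \<tau>!i" using tt ei perms_elem[OF P k1] by auto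
            then have "k - 1 = i" using perms_inj[OF P k1 i(1)] by simp
            then show False using False k0 by simp
          qed
          then show ?thesis using L0 Rt km False by simp
        qed
      qed
    next
      case od: False
      then have od1: "t mod 2 = 1" by simp
      have tt: "t = 2*(\<tau>!i - 1) + 1" using tj od1 by simp
      have L1: "?L ! t = (if i = k then Up else profile \<tau> ! t)" using Lt pt od1 by simp
      show ?thesis
      proof (cases "k = m")
        case True then show ?thesis using L1 Rt i by auto
      next
        case km: False
        show ?thesis
        proof (cases "i = k")
          case True
          show ?thesis
          proof (cases "k = 0")
            case True then have "t = g \<tau> k" using tt \<open>i = k\<close> unfolding g_def by simp
            then show ?thesis using L1 Rt km \<open>i = k\<close> by simp
          next
            case k0: False
            have k1: "k - 1 < m" using k k0 by simp
            show ?thesis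
            proof (cases "\<tau>!(k-1) < \<tau>!k")
              case True
              then have "t = g \<tau> k" using tt \<open>i = k\<close> k0 unfolding g_def by simp
              then show ?thesis using L1 Rt km \<open>i = k\<close> by simp
            next
              case False
              have ne: "\<tau>!(k-1) \<noteq> \<tau>!k" using perms_inj[OF P k1] k0 \<open>i=k\<close> i by fastforce
              have "Lf \<tau> i = \<tau>!(k-1)" using k0 \<open>i = k\<close> by (simp add: Lf_def)
              then have "profile \<tau> ! t = Up" using pt od1 LT False ne \<open>i = k\<close> by (simp add: st_def)
              then show ?thesis using L1 Rt km by auto
            qed
          qed
        next
          case False
          have "t \<noteq> g \<tau> k"
          proof
            assume tg: "t = g \<tau> k"
            have km': "k < m" using km k by simp
            have "g \<tau> k = 2*(\<tau>!k - 1) + 1"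
              using tg od1 unfolding g_def by (auto split: if_splits)
            then have "\<tau>!k = \<tau>!i" using tg tt ei perms_elem[OF P km'] by auto
            then show False using perms_inj[OF P km' i(1)] False by simp
          qed
          then show ?thesis using L1 Rt km False by simp
        qed
      qed
    qed
  next
    case False
    then have tm: "t = 2*m \<or> t = 2*m+1" using t by auto
    have Sk: "\<sigma>!k = Suc m" using sn[of k] k by simp
    have km1: "k < Suc m" using k by simp
    have LS: "letters \<sigma> (Suc m) = [st (Suc m < Rf \<sigma> k), st (Suc m < Lf \<sigma> k)]"
      using letters_nth[OF Ps km1] Sk by simp
    have Lf0: "st (Suc m < Lf \<sigma> k) = Dn"
    proof (cases k)
      case 0 then show ?thesis by (simp add: Lf_def st_def)
    next
      case (Suc k')
      then have "Lf \<sigma> k = \<tau>!k'" using sn[of k'] k by (simp add: Lf_def)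
      then show ?thesis using perms_elem[OF P, of k'] Suc k by (simp add: st_def)
    qed
    have Rf0: "st (Suc m < Rf \<sigma> k) = (if k = m then Up else Dn)"
    proof (cases "k = m")
      case True then show ?thesis using ls by (simp add: Rf_def st_def)
    next
      case False
      then have "Rf \<sigma> k = \<tau>!k" using sn[of "Suc k"] k ls by (simp add: Rf_def)
      then show ?thesis using perms_elem[OF P, of k] False k by (simp add: st_def)
    qed
    have dv: "t div 2 + 1 = Suc m" using tm by auto
    show ?thesis using tm
    proof
      assume t2: "t = 2*m"
      then show ?thesis using pn dv LS Rf0 lP by (auto simp: nth_append)
    next
      assume t2: "t = 2*m+1"
      then show ?thesis using pn dv LS Lf0 lP by (auto simp: nth_append)
    qed
  qed
qed


lemma Q_surj:
  assumes P: "\<tau> \<in> perms m" and p: "p < 2*m" "profile \<tau> ! p = Dn"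
  shows "\<exists>k<m. g \<tau> k = p"
proof -
  have lt: "length \<tau> = m" using P by (simp add: perms_def)
  define j where "j = p div 2 + 1"
  have j: "1 \<le> j" "j \<le> m" using p j_def by auto
  obtain i where i: "i < m" "\<tau>!i = j" using perms_ex[OF P j] by blast
  have ei: "1 \<le> \<tau>!i" "\<tau>!i \<le> m" using perms_elem[OF P i(1)] by auto
  show ?thesis
  proof (cases "p mod 2 = 0")
    case True
    then have pp: "p = 2*(\<tau>!i - 1)" using i j_def by auto
    then have "st (\<tau>!i < Rf \<tau> i) = Dn" using prof_tau(1)[OF P i(1)] p by simp
    then have nr: "\<not> \<tau>!i < Rf \<tau> i" by (auto simp: st_def split: if_splits)
    then have si: "Suc i < m" using lt ei by (auto simp: Rf_def split: if_splits)
    then have "\<not> \<tau>!i < \<tau>!(Suc i)" using nr lt by (simp add: Rf_def)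
    then have "g \<tau> (Suc i) = p" using pp unfolding g_def by simp
    then show ?thesis using si by blast
  next
    case False
    have q: "\<tau>!i - 1 = p div 2" using i j_def by simp
    have pp: "p = 2*(\<tau>!i - 1) + 1" unfolding q using False by presburger
    then have "st (\<tau>!i < Lf \<tau> i) = Dn" using prof_tau(2)[OF P i(1)] p by simp
    then have nl: "\<not> \<tau>!i < Lf \<tau> i" by (auto simp: st_def split: if_splits)
    show ?thesis
    proof (cases i)
      case 0
      then have "g \<tau> 0 = p" using pp unfolding g_def by simp
      then show ?thesis using i 0 by blast
    next
      case (Suc i')
      have i': "i' < m" using Suc i by simp
      have "\<tau>!i' \<noteq> \<tau>!i" using perms_inj[OF P i' i(1)] Suc by auto
      then have "\<tau>!i' < \<tau>!i" using nl Suc by (simp add: Lf_def)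
      then have "g \<tau> i = p" using pp Suc unfolding g_def by simp
      then show ?thesis using i by blast
    qed
  qed
qed

lemma g_inj:
  assumes P: "\<tau> \<in> perms m" and k: "k < m" "k' < m" and eq: "g \<tau> k = g \<tau> k'"
  shows "k = k'"
proof -
  have od: "odd (g \<tau> x) \<longleftrightarrow> (x = 0 \<or> \<tau>!(x-1) < \<tau>!x)" for x
    unfolding g_def by auto
  have e: "1 \<le> \<tau>!x" "\<tau>!x \<le> m" if "x < m" for x using perms_elem[OF P that] by auto
  show ?thesis
  proof (cases "odd (g \<tau> k)")
    case True
    then have a: "g \<tau> k = 2*(\<tau>!k - 1) + 1" "g \<tau> k' = 2*(\<tau>!k' - 1) + 1"
      using eq od[of k] od[of k'] unfolding g_def by (auto split: if_splits)
    then have "\<tau>!k = \<tau>!k'" using eq e[OF k(1)] e[OF k(2)] by auto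
    then show ?thesis using perms_inj[OF P k] by simp
  next
    case False
    then have k0: "k \<noteq> 0" "k' \<noteq> 0" using eq od[of k] od[of k'] by auto
    have a: "g \<tau> k = 2*(\<tau>!(k-1) - 1)" "g \<tau> k' = 2*(\<tau>!(k'-1) - 1)"
      using False eq od[of k] od[of k'] unfolding g_def by (auto split: if_splits)
    have k1: "k - 1 < m" "k' - 1 < m" using k by auto
    have "\<tau>!(k-1) - 1 = \<tau>!(k'-1) - 1" using a eq by simp
    then have "\<tau>!(k-1) = \<tau>!(k'-1)" using e[OF k1(1)] e[OF k1(2)] by arith
    then have "k - 1 = k' - 1" using perms_inj[OF P k1] by simp
    then show ?thesis using k0 by simp
  qed
qed



lemma chains_Suc:
  "Ds \<in> chains (Suc m) \<longleftrightarrow> (\<exists>c E. Ds = c @ [E] \<and> c \<in> chains m \<and> dyck E \<and> length E = 2*Suc m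
      \<and> (0 < m \<longrightarrow> shape_step (c!(m-1)) E))"
proof
  assume H: "Ds \<in> chains (Suc m)"
  then have l: "length Ds = Suc m" by (simp add: chains_def)
  define c where "c = butlast Ds"
  define E where "E = last Ds"
  have D: "Ds = c @ [E]" using l c_def E_def by (metis append_butlast_last_id list.size(3) nat.distinct(1))
  have nth: "Ds ! i = (if i < m then c!i else E)" if "i \<le> m" for i
    using D l that by (simp add: nth_append)
  have lc: "length c = m" using l c_def by simp
  have a: "\<forall>i < Suc m. dyck (Ds ! i) \<and> length (Ds ! i) = 2 * (i + 1)"
    and b: "\<forall>i. i + 1 < Suc m \<longrightarrow> shape_step (Ds ! i) (Ds ! (i + 1))" using H by (auto simp: chains_def)
  have "c \<in> chains m" unfolding chains_def
  proof (intro CollectI conjI allI impI)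
    show "length c = m" by (rule lc)
    fix i assume "i < m"
    then have "i < Suc m" by simp
    then have "dyck (Ds ! i) \<and> length (Ds ! i) = 2 * (i + 1)" using a by blast
    then show "dyck (c ! i)" "length (c ! i) = 2 * (i + 1)" using nth[of i] \<open>i < m\<close> by auto
  next
    fix i assume "i + 1 < m"
    moreover have "shape_step (Ds ! i) (Ds ! (i + 1))" using b \<open>i + 1 < m\<close> by simp
    ultimately show "shape_step (c ! i) (c ! (i + 1))" using nth[of i] nth[of "i+1"] by auto
  qed
  moreover have "dyck E" "length E = 2*Suc m" using a nth[of m] by auto
  moreover have "0 < m \<longrightarrow> shape_step (c!(m-1)) E"
  proof
    assume m0: "0 < m"
    then have "m - 1 + 1 < Suc m" by simp
    then have "shape_step (Ds ! (m-1)) (Ds ! (m - 1 + 1))" using b by blast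
    then show "shape_step (c!(m-1)) E" using nth[of "m-1"] nth[of m] m0 by simp
  qed
  ultimately show "\<exists>c E. Ds = c @ [E] \<and> c \<in> chains m \<and> dyck E \<and> length E = 2*Suc m
      \<and> (0 < m \<longrightarrow> shape_step (c!(m-1)) E)" using D by blast
next
  assume "\<exists>c E. Ds = c @ [E] \<and> c \<in> chains m \<and> dyck E \<and> length E = 2*Suc m
      \<and> (0 < m \<longrightarrow> shape_step (c!(m-1)) E)"
  then obtain c E where D: "Ds = c @ [E]" and c: "c \<in> chains m" and E: "dyck E" "length E = 2*Suc m"
    and s: "0 < m \<longrightarrow> shape_step (c!(m-1)) E" by blast
  have lc: "length c = m" using c by (simp add: chains_def)
  have nth: "Ds ! i = (if i < m then c!i else E)" if "i \<le> m" for i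
    using D lc that by (simp add: nth_append)
  have a: "\<forall>i < m. dyck (c ! i) \<and> length (c ! i) = 2 * (i + 1)"
    and b: "\<forall>i. i + 1 < m \<longrightarrow> shape_step (c ! i) (c ! (i + 1))" using c by (auto simp: chains_def)
  show "Ds \<in> chains (Suc m)" unfolding chains_def
  proof (intro CollectI conjI allI impI)
    show "length Ds = Suc m" using D lc by simp
    fix i assume "i < Suc m"
    then show "dyck (Ds ! i)" "length (Ds ! i) = 2 * (i + 1)" using a nth[of i] E by auto
  next
    fix i assume i: "i + 1 < Suc m"
    show "shape_step (Ds ! i) (Ds ! (i + 1))"
    proof (cases "i + 1 < m")
      case True then show ?thesis using b nth[of i] nth[of "i+1"] by simp
    next
      case False
      then have "i + 1 = m" using i by simp
      then show ?thesis using s nth[of i] nth[of "i+1"] by auto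
    qed
  qed
qed

lemma dyck_len2: assumes "dyck E" "length E = 2" shows "E = [Up, Dn]"
proof -
  have t: "height E 1 = 1 \<and> E!1 = Dn \<and> ((height E 0 = 0 \<and> E!0 = Up) \<or> (height E 0 = 2 \<and> E!0 = Dn))"
    using dyck_tail[OF assms(1), of 0] assms(2) by simp
  then have "E!0 = Up" "E!1 = Dn" by auto
  then show ?thesis using assms(2)
    by (cases E; cases "tl E") auto
qed

lemma perms0: "perms 0 = {[]}" by (auto simp: perms_def)
lemma chains0: "chains 0 = {[]}" by (auto simp: chains_def)

lemma pc_ins:
  assumes P: "\<tau> \<in> perms m" and k: "k \<le> m"
  shows "profile_chain (ins k \<tau> (Suc m)) = profile_chain \<tau> @ [profile (ins k \<tau> (Suc m))]"
proof -
  have "length (ins k \<tau> (Suc m)) = Suc m" using ins_perm[OF P k] by (simp add: perms_def)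
  moreover have "length (del_max (ins k \<tau> (Suc m))) = m" using del_ins[OF P k] P by (simp add: perms_def)
  ultimately show ?thesis using pc_snoc del_ins[OF P k] by metis
qed

theorem main_bij: "bij_betw profile_chain (perms n) (chains n)"
proof (induction n)
  case 0 then show ?case by (simp add: perms0 chains0 bij_betw_def profile_chain_def)
next
  case (Suc m)
  have inj: "inj_on profile_chain (perms m)" and img: "profile_chain ` perms m = chains m"
    using Suc.IH by (auto simp: bij_betw_def)
  have dP: "dyck (profile \<tau>)" and lP: "length (profile \<tau>) = 2*m" if P: "\<tau> \<in> perms m" for \<tau>
  proof -
    show "length (profile \<tau>) = 2*m" using P by (simp add: perms_def length_profile)
    show "dyck (profile \<tau>)"
    proof (cases m)
      case 0 then have "\<tau> = []" using P by (simp add: perms_def)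
      then show ?thesis by (simp add: dyck_def profile_def)
    next
      case (Suc m')
      have "profile_chain \<tau> \<in> chains m" using img P by blast
      then have "dyck (profile_chain \<tau> ! m')" using Suc by (simp add: chains_def)
      moreover have "profile_chain \<tau> ! m' = profile \<tau>"
      proof -
        have "length \<tau> = Suc m'" using P Suc by (simp add: perms_def)
        then show ?thesis using pc_last[of \<tau>] by (cases \<tau>) auto
      qed
      ultimately show ?thesis by simp
    qed
  qed
  have last_pc: "0 < m \<Longrightarrow> profile_chain \<tau> ! (m-1) = profile \<tau>" if "\<tau> \<in> perms m" for \<tau>
  proof -
    assume "0 < m"
    have "length \<tau> = m" using that by (simp add: perms_def)
    then show ?thesis using pc_last[of \<tau>] \<open>0 < m\<close> by auto
  qed
  have prof_B: "profile (ins k \<tau> (Suc m)) \<in> Bset (profile \<tau>)" if P: "\<tau> \<in> perms m" and k: "k \<le> m" for \<tau> k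
  proof (cases "k = m")
    case True then show ?thesis using prof_ins[OF P k] by (simp add: Bset_def)
  next
    case False
    then have "k < m" using k by simp
    then show ?thesis using prof_ins[OF P k] g_prop[OF P] False lP[OF P] unfolding Bset_def by auto
  qed
  show ?case unfolding bij_betw_def
  proof (intro conjI)
    show "inj_on profile_chain (perms (Suc m))"
    proof (rule inj_onI)
      fix \<sigma>1 \<sigma>2 assume s1: "\<sigma>1 \<in> perms (Suc m)" and s2: "\<sigma>2 \<in> perms (Suc m)"
        and eq: "profile_chain \<sigma>1 = profile_chain \<sigma>2"
      obtain \<tau>1 k1 where t1: "\<tau>1 \<in> perms m" "k1 \<le> m" "\<sigma>1 = ins k1 \<tau>1 (Suc m)" using perm_decomp[OF s1] by blast
      obtain \<tau>2 k2 where t2: "\<tau>2 \<in> perms m" "k2 \<le> m" "\<sigma>2 = ins k2 \<tau>2 (Suc m)" using perm_decomp[OF s2] by blast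
      have "profile_chain \<tau>1 = profile_chain \<tau>2 \<and> profile \<sigma>1 = profile \<sigma>2"
        using eq pc_ins[OF t1(1,2)] pc_ins[OF t2(1,2)] t1(3) t2(3) by simp
      then have tt: "\<tau>1 = \<tau>2" and pp: "profile \<sigma>1 = profile \<sigma>2" using inj t1 t2 by (auto dest: inj_onD)
      have pr1: "profile \<sigma>1 = (if k1 = m then profile \<tau>1 @ [Up,Dn] else (profile \<tau>1)[g \<tau>1 k1 := Up] @ [Dn,Dn])"
        using prof_ins[OF t1(1,2)] t1(3) by simp
      have pr2: "profile \<sigma>2 = (if k2 = m then profile \<tau>1 @ [Up,Dn] else (profile \<tau>1)[g \<tau>1 k2 := Up] @ [Dn,Dn])"
        using prof_ins[OF t2(1,2)] t2(3) tt by simp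
      have l1: "length (profile \<tau>1) = 2*m" using lP[OF t1(1)] .
      have "k1 = k2"
      proof (cases "k1 = m \<or> k2 = m")
        case True
        have "(profile \<sigma>1) ! (2*m) = (if k1 = m then Up else Dn)" using pr1 l1 by (simp add: nth_append)
        moreover have "(profile \<sigma>2) ! (2*m) = (if k2 = m then Up else Dn)" using pr2 l1 by (simp add: nth_append)
        ultimately show ?thesis using pp True by (auto split: if_splits)
      next
        case False
        then have k: "k1 < m" "k2 < m" using t1 t2 by auto
        have ee: "(profile \<tau>1)[g \<tau>1 k1 := Up] = (profile \<tau>1)[g \<tau>1 k2 := Up]"
          using pp pr1 pr2 False by simp
        have G1: "g \<tau>1 k1 < 2*m" "profile \<tau>1 ! g \<tau>1 k1 = Dn" using g_prop[OF t1(1) k(1)] by auto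
        have "g \<tau>1 k1 = g \<tau>1 k2"
        proof (rule ccontr)
          assume ne: "g \<tau>1 k1 \<noteq> g \<tau>1 k2"
          have "(profile \<tau>1)[g \<tau>1 k1 := Up] ! g \<tau>1 k1 = Up" using G1 l1 by simp
          moreover have "(profile \<tau>1)[g \<tau>1 k2 := Up] ! g \<tau>1 k1 = Dn" using G1 l1 ne by simp
          ultimately show False using ee by simp
        qed
        then show ?thesis using g_inj[OF t1(1) k] by simp
      qed
      then show "\<sigma>1 = \<sigma>2" using t1 t2 tt by simp
    qed
    show "profile_chain ` perms (Suc m) = chains (Suc m)"
    proof
      show "profile_chain ` perms (Suc m) \<subseteq> chains (Suc m)"
      proof
        fix Ds assume "Ds \<in> profile_chain ` perms (Suc m)"
        then obtain \<sigma> where s: "\<sigma> \<in> perms (Suc m)" "Ds = profile_chain \<sigma>" by blast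
        obtain \<tau> k where t: "\<tau> \<in> perms m" "k \<le> m" "\<sigma> = ins k \<tau> (Suc m)" using perm_decomp[OF s(1)] by blast
        have D: "Ds = profile_chain \<tau> @ [profile \<sigma>]" using s t pc_ins[OF t(1,2)] by simp
        have c: "profile_chain \<tau> \<in> chains m" using img t by blast
        have EB: "dyck (profile \<sigma>) \<and> shape_step (profile \<tau>) (profile \<sigma>)"
          using B_iff[OF dP[OF t(1)] lP[OF t(1)]] prof_B[OF t(1,2)] t(3) by simp
        have lE: "length (profile \<sigma>) = 2*Suc m" using s by (simp add: perms_def length_profile)
        show "Ds \<in> chains (Suc m)" unfolding chains_Suc
          using D c EB lE last_pc[OF t(1)] by auto
      qed
      show "chains (Suc m) \<subseteq> profile_chain ` perms (Suc m)"
      proof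
        fix Ds assume "Ds \<in> chains (Suc m)"
        then obtain c E where D: "Ds = c @ [E]" and c: "c \<in> chains m" and E: "dyck E" "length E = 2*Suc m"
          and s: "0 < m \<longrightarrow> shape_step (c!(m-1)) E" unfolding chains_Suc by blast
        obtain \<tau> where t: "\<tau> \<in> perms m" "c = profile_chain \<tau>" using c img by blast
        have EB: "E \<in> Bset (profile \<tau>)"
        proof (cases m)
          case 0
          then have "E = [Up,Dn]" using dyck_len2 E by simp
          moreover have "profile \<tau> = []" using t 0 by (simp add: perms_def profile_def)
          ultimately show ?thesis by (simp add: Bset_def)
        next
          case (Suc m')
          then have "shape_step (profile \<tau>) E" using s last_pc[OF t(1)] t(2) by simp
          then show ?thesis using B_iff[OF dP[OF t(1)] lP[OF t(1)], of E] E by blast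
        qed
        obtain k where k: "k \<le> m" "profile (ins k \<tau> (Suc m)) = E"
        proof (cases "E = profile \<tau> @ [Up,Dn]")
          case True
          then show ?thesis using that[of m] prof_ins[OF t(1), of m] by simp
        next
          case False
          then obtain p where p: "p < length (profile \<tau>)" "profile \<tau> ! p = Dn" "E = (profile \<tau>)[p:=Up] @ [Dn,Dn]"
            using EB unfolding Bset_def by auto
          obtain k where k: "k < m" "g \<tau> k = p" using Q_surj[OF t(1)] p lP[OF t(1)] by auto
          show ?thesis using that[of k] prof_ins[OF t(1), of k] k p by simp
        qed
        have "Ds = profile_chain (ins k \<tau> (Suc m))" using D t pc_ins[OF t(1) k(1)] k(2) by simp
        moreover have "ins k \<tau> (Suc m) \<in> perms (Suc m)" using ins_perm[OF t(1) k(1)] .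
        ultimately show "Ds \<in> profile_chain ` perms (Suc m)" by blast
      qed
    qed
  qed
qed


theorem mainTheorem7:
  fixes n :: nat
  assumes "n \<ge> 1"
  shows "bij_betw profile_chain (perms n) (chains n)"
  using main_bij by blast

end
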